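(* Let $A$ be any formula of $\mathbf{L_1}$. Every normal tableau for $A$ is finite (any process of extending branches of a tableau for $A$ by normal rule applications terminates after finitely many steps), and in a completed normal tableau for $A$ every branch ends either with a formula of the form $F[B_+,B_-]$ or with a Hintikka formula.
   Context: Formulas of $\mathbf{L_1}$: built from atomic formulas $\epsilon ab$ ($a,b$ name variables from a countably infinite list, possibly equal) with connectives $\vee,\sim$. Disjunctions may be associated in any way. Positive/negative parts (occurrences): $A$ is a positive part of $A$; if $B\vee C$ is a positive part then $B,C$ are positive parts; if $\sim B$ is a positive part then $B$ is a negative part; if $\sim B$ is a negative part then $B$ is a positive part. $F[B_+]$ ($G[B_-]$) denotes a formula with a specified occurrence of $B$ as positive (negative) part; $F[B_+,C_-]$ etc. denote specified non-overlapping occurrences. Tableaux: reduction rules ($\vee_-$) $G[B\vee C_-]$ $\mapsto$ two branches $G[B\vee C_-]\vee\sim B$, $G[B\vee C_-]\vee\sim C$; ($\epsilon_1$) $G[\epsilon ab_-]\mapsto G[\epsilon ab_-]\vee\sim\epsilon aa$; ($\epsilon_2$) $G[\epsilon ab_-,\epsilon bc_-]\mapsto G[\epsilon ab_-,\epsilon bc_-]\vee\sim\epsilon ac$; ($\epsilon_{3b}$) $G[\epsilon ab_-,\epsilon bb_-]\mapsto G[\epsilon ab_-,\epsilon bb_-]\vee\sim\epsilon ba$. A tableau for $A$ is a finite tree with root $A$ whose non-leaf nodes have as children the result of applying one rule to it. A tableau is normal if each rule application is made only to a formula not of the form $F[B_+,B_-]$ and only when the formula appended after $\sim$ (i.e.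 $B$, $C$, $\epsilon aa$, $\epsilon ac$ or $\epsilon ba$ respectively) does not already occur as a negative part of the formula being reduced. A normal tableau is completed if no further normal rule application is possible at the end of any branch. Hintikka formula: a formula $H$ such that (1) $H$ is not of the form $F[B_+,B_-]$; (2) if $B\vee C$ is a negative part of $H$ then $B$ or $C$ is; (3) if $\epsilon ab$ is a negative part then so is $\epsilon aa$; (4) if $\epsilon ab,\epsilon bc$ are negative parts then so is $\epsilon ac$; (5) if $\epsilon ab,\epsilon bb$ are negative parts then so is $\epsilon ba$. *)

theory Defs
  imports Main
begin

datatype fm = Eps nat nat | Or fm fm | Neg fm

text \<open>part A p B: B is a positive (p = True) / negative (p = False) part of A.\<close>
inductive part :: "fm \<Rightarrow> bool \<Rightarrow> fm \<Rightarrow> bool" for A :: fm where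
  self: "part A True A"
| disjL: "part A True (Or B C) \<Longrightarrow> part A True B"
| disjR: "part A True (Or B C) \<Longrightarrow> part A True C"
| neg: "part A p (Neg B) \<Longrightarrow> part A (\<not> p) B"

abbreviation pos_part :: "fm \<Rightarrow> fm \<Rightarrow> bool" where "pos_part A B \<equiv> part A True B"
abbreviation neg_part :: "fm \<Rightarrow> fm \<Rightarrow> bool" where "neg_part A B \<equiv> part A False B"

definition closed_fm :: "fm \<Rightarrow> bool" where
  "closed_fm F \<longleftrightarrow> (\<exists>B. pos_part F B \<and> neg_part F B)"

text \<open>rule_app G ns: some reduction rule applies to G, appending the formulas of ns
  (after negation), one per resulting branch; the children are  G \<or> \<sim>B  for B in ns.\<close>
inductive rule_app :: "fm \<Rightarrow> fm list \<Rightarrow> bool" where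
  or_neg: "neg_part G (Or B C) \<Longrightarrow> rule_app G [B, C]"
| eps1: "neg_part G (Eps a b) \<Longrightarrow> rule_app G [Eps a a]"
| eps2: "neg_part G (Eps a b) \<Longrightarrow> neg_part G (Eps b c) \<Longrightarrow> rule_app G [Eps a c]"
| eps3b: "neg_part G (Eps a b) \<Longrightarrow> neg_part G (Eps b b) \<Longrightarrow> rule_app G [Eps b a]"

definition normal_app :: "fm \<Rightarrow> fm list \<Rightarrow> bool" where
  "normal_app G ns \<longleftrightarrow> rule_app G ns \<and> \<not> closed_fm G \<and> (\<forall>B\<in>set ns. \<not> neg_part G B)"

definition normal_succ :: "fm \<Rightarrow> fm \<Rightarrow> bool" where
  "normal_succ G H \<longleftrightarrow> (\<exists>ns B. normal_app G ns \<and> B \<in> set ns \<and> H = Or G (Neg B))"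

datatype tab = Node fm "tab list"

fun root :: "tab \<Rightarrow> fm" where "root (Node G ts) = G"

fun num_nodes :: "tab \<Rightarrow> nat" where
  "num_nodes (Node G ts) = 1 + sum_list (map num_nodes ts)"

fun leaf_labels :: "tab \<Rightarrow> fm set" where
  "leaf_labels (Node G ts) = (if ts = [] then {G} else (\<Union>t\<in>set ts. leaf_labels t))"

inductive normal_tab :: "tab \<Rightarrow> bool" where
  leaf: "normal_tab (Node G [])"
| step: "normal_app G ns \<Longrightarrow> map root ts = map (\<lambda>B. Or G (Neg B)) ns \<Longrightarrow>
         (\<forall>t\<in>set ts. normal_tab t) \<Longrightarrow> normal_tab (Node G ts)"

definition normal_tableau_for :: "fm \<Rightarrow> tab \<Rightarrow> bool" where
  "normal_tableau_for A t \<longleftrightarrow> normal_tab t \<and> root t = A"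

definition completed :: "tab \<Rightarrow> bool" where
  "completed t \<longleftrightarrow> (\<forall>L\<in>leaf_labels t. \<not> (\<exists>ns. normal_app L ns))"

definition hintikka :: "fm \<Rightarrow> bool" where
  "hintikka H \<longleftrightarrow> \<not> closed_fm H
     \<and> (\<forall>B C. neg_part H (Or B C) \<longrightarrow> neg_part H B \<or> neg_part H C)
     \<and> (\<forall>a b. neg_part H (Eps a b) \<longrightarrow> neg_part H (Eps a a))
     \<and> (\<forall>a b c. neg_part H (Eps a b) \<and> neg_part H (Eps b c) \<longrightarrow> neg_part H (Eps a c))
     \<and> (\<forall>a b. neg_part H (Eps a b) \<and> neg_part H (Eps b b) \<longrightarrow> neg_part H (Eps b a))"

end

theory Submission
  imports Defs
begin

fun subs :: "fm \<Rightarrow> fm set" where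
  "subs (Eps a b) = {Eps a b}"
| "subs (Or B C) = insert (Or B C) (subs B \<union> subs C)"
| "subs (Neg B) = insert (Neg B) (subs B)"

fun nms :: "fm \<Rightarrow> nat set" where
  "nms (Eps a b) = {a, b}"
| "nms (Or B C) = nms B \<union> nms C"
| "nms (Neg B) = nms B"

lemma finite_subs: "finite (subs A)"
  by (induction A) auto

lemma finite_nms: "finite (nms A)"
  by (induction A) auto

lemma self_subs: "A \<in> subs A"
  by (cases A) auto

lemma subs_trans: "Y \<in> subs X \<Longrightarrow> X \<in> subs A \<Longrightarrow> Y \<in> subs A"
  by (induction A) auto

lemma subs_eps_nms: "Eps a b \<in> subs A \<Longrightarrow> a \<in> nms A \<and> b \<in> nms A"
  by (induction A) auto

lemma part_subs: "part A p X \<Longrightarrow> X \<in> subs A"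
proof (induction rule: part.induct)
  case self then show ?case by (rule self_subs)
next
  case (disjL B C) then show ?case using subs_trans[of B "Or B C" A] self_subs by auto
next
  case (disjR B C) then show ?case using subs_trans[of C "Or B C" A] self_subs by auto
next
  case (neg p B) then show ?case using subs_trans[of B "Neg B" A] self_subs by auto
qed

definition U :: "fm \<Rightarrow> fm set" where
  "U A = subs A \<union> (\<lambda>(a,b). Eps a b) ` (nms A \<times> nms A)"

lemma finite_U: "finite (U A)"
  unfolding U_def using finite_subs finite_nms by auto

lemma U_closed: "X \<in> U A \<Longrightarrow> Y \<in> subs X \<Longrightarrow> Y \<in> U A"
  unfolding U_def using subs_trans by auto

lemma U_eps: "Eps a b \<in> U A \<Longrightarrow> a \<in> nms A \<and> b \<in> nms A"
  unfolding U_def using subs_eps_nms by auto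

lemma U_eps_in: "a \<in> nms A \<Longrightarrow> b \<in> nms A \<Longrightarrow> Eps a b \<in> U A"
  unfolding U_def by auto

lemma part_Or_Neg:
  "part (Or G (Neg B)) p X \<Longrightarrow>
     (p \<and> X = Or G (Neg B)) \<or> part G p X \<or> (p \<and> X = Neg B) \<or> X \<in> subs B"
proof (induction rule: part.induct)
  case self then show ?case by simp
next
  case (disjL B' C')
  then show ?case
    using part.self part.disjL subs_trans[of B' "Or B' C'" B] self_subs by auto
next
  case (disjR B' C')
  then show ?case
    using part.self part.disjR subs_trans[of C' "Or B' C'" B] self_subs by auto
next
  case (neg p B')
  then show ?case
    using part.neg subs_trans[of B' "Neg B'" B] self_subs by auto
qed

lemma part_mono: "part G p X \<Longrightarrow> part (Or G (Neg B)) p X"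
proof (induction rule: part.induct)
  case self then show ?case using part.self part.disjL by blast
next
  case (disjL B C) then show ?case using part.disjL by blast
next
  case (disjR B C) then show ?case using part.disjR by blast
next
  case (neg p B) then show ?case using part.neg by blast
qed

lemma part_new: "neg_part (Or G (Neg B)) B"
proof -
  have "pos_part (Or G (Neg B)) (Neg B)" using part.self part.disjR by blast
  then show ?thesis using part.neg by fastforce
qed

definition Inv :: "fm \<Rightarrow> fm \<Rightarrow> bool" where
  "Inv A G \<longleftrightarrow> (\<forall>X. neg_part G X \<longrightarrow> X \<in> U A)"

definition m :: "fm \<Rightarrow> fm \<Rightarrow> nat" where
  "m A G = card (U A - {X. neg_part G X})"

lemma Inv_base: "Inv A A"
  unfolding Inv_def U_def by (simp add: part_subs)

lemma new_in_U:
  assumes "Inv A G" "rule_app G ns" "B \<in> set ns"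
  shows "B \<in> U A"
  using assms(2,3)
proof (cases rule: rule_app.cases)
  case (or_neg B' C)
  then have "Or B' C \<in> U A" using assms(1) Inv_def by blast
  moreover have "B \<in> subs (Or B' C)" using or_neg assms(3) self_subs by auto
  ultimately show ?thesis using U_closed by blast
next
  case (eps1 a b)
  then have "Eps a b \<in> U A" using assms(1) Inv_def by blast
  then have "a \<in> nms A" using U_eps by blast
  then show ?thesis using eps1 assms(3) U_eps_in by simp
next
  case (eps2 a b c)
  then have "Eps a b \<in> U A" "Eps b c \<in> U A" using assms(1) Inv_def by blast+
  then have "a \<in> nms A" "c \<in> nms A" using U_eps by blast+
  then show ?thesis using eps2 assms(3) U_eps_in by simp
next
  case (eps3b a b)
  then have "Eps a b \<in> U A" using assms(1) Inv_def by blast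
  then have "a \<in> nms A" "b \<in> nms A" using U_eps by blast+
  then show ?thesis using eps3b assms(3) U_eps_in by simp
qed

lemma succ_step:
  assumes "Inv A G" "normal_succ G H"
  shows "Inv A H \<and> m A H < m A G"
proof -
  obtain ns B where nb: "normal_app G ns" "B \<in> set ns" "H = Or G (Neg B)"
    using assms(2) normal_succ_def by blast
  have BU: "B \<in> U A" using new_in_U[OF assms(1)] nb normal_app_def by blast
  have Bn: "\<not> neg_part G B" using nb normal_app_def by blast
  have inv: "Inv A H"
    unfolding Inv_def
  proof (intro allI impI)
    fix X assume "neg_part H X"
    then have "neg_part G X \<or> X \<in> subs B" using part_Or_Neg nb(3) by blast
    then show "X \<in> U A" using assms(1) Inv_def BU U_closed by blast
  qed
  have "U A - {X. neg_part H X} \<subset> U A - {X. neg_part G X}"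
    using part_mono part_new nb(3) BU Bn by blast
  then have "m A H < m A G" unfolding m_def using finite_U psubset_card_mono
    by (metis finite_Diff)
  then show ?thesis using inv by blast
qed

lemma sum_list_bound:
  "(\<forall>x\<in>set xs. f x \<le> (c::nat)) \<Longrightarrow> sum_list (map f xs) \<le> length xs * c"
  by (induction xs) auto

lemma rule_app_len: "rule_app G ns \<Longrightarrow> length ns \<le> 2"
  by (induction rule: rule_app.induct) auto

lemma tab_bound:
  "normal_tab t \<Longrightarrow> Inv A (root t) \<Longrightarrow> num_nodes t \<le> 3 ^ m A (root t)"
proof (induction rule: normal_tab.induct)
  case (leaf G) then show ?case by simp
next
  case (step G ns ts)
  let ?k = "m A G"
  have ch: "Inv A (root t) \<and> m A (root t) < ?k" if "t \<in> set ts" for t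
  proof -
    have "root t \<in> set (map (\<lambda>B. Or G (Neg B)) ns)"
      using step.hyps(2) that by (metis image_eqI list.set_map)
    then obtain B where "B \<in> set ns" "root t = Or G (Neg B)" by auto
    then have "normal_succ G (root t)" using step.hyps(1) normal_succ_def by blast
    then show ?thesis using succ_step step.prems by simp
  qed
  show ?case
  proof (cases "ts = []")
    case True then show ?thesis by simp
  next
    case False
    then obtain t0 where "t0 \<in> set ts" by (cases ts) auto
    then have kpos: "?k \<ge> 1" using ch by fastforce
    have b: "\<forall>t\<in>set ts. num_nodes t \<le> 3 ^ (?k - 1)"
    proof
      fix t assume t: "t \<in> set ts"
      then have "num_nodes t \<le> 3 ^ m A (root t)" using step.IH ch by blast
      also have "\<dots> \<le> 3 ^ (?k - 1)" using ch[OF t] by (intro power_increasing) auto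
      finally show "num_nodes t \<le> 3 ^ (?k - 1)" .
    qed
    have len: "length ts \<le> 2"
      using step.hyps(1,2) rule_app_len normal_app_def by (metis length_map)
    have "sum_list (map num_nodes ts) \<le> length ts * 3 ^ (?k - 1)"
      using sum_list_bound[OF b] .
    also have "\<dots> \<le> 2 * 3 ^ (?k - 1)" using len by simp
    finally have s: "sum_list (map num_nodes ts) \<le> 2 * 3 ^ (?k - 1)" .
    have "(3::nat) ^ ?k = 3 * 3 ^ (?k - 1)" using kpos
      by (metis Suc_diff_le diff_Suc_1 power_Suc)
    moreover have "(1::nat) \<le> 3 ^ (?k - 1)" by simp
    ultimately have e: "(3::nat) ^ ?k = 3 * 3 ^ (?k - 1)" and o: "(1::nat) \<le> 3 ^ (?k - 1)" by blast+
    have "num_nodes (Node G ts) = 1 + sum_list (map num_nodes ts)" by simp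
    also have "\<dots> \<le> 3 ^ (?k - 1) + 2 * 3 ^ (?k - 1)" using s o by linarith
    also have "\<dots> = 3 ^ ?k" using e by simp
    finally show ?thesis by simp
  qed
qed

lemma no_chain: "\<not> (\<exists>f. f 0 = A \<and> (\<forall>n. normal_succ (f n) (f (Suc n))))"
proof
  assume "\<exists>f. f 0 = A \<and> (\<forall>n. normal_succ (f n) (f (Suc n)))"
  then obtain f where f: "f 0 = A" "\<forall>n. normal_succ (f n) (f (Suc n))" by blast
  have "Inv A (f n) \<and> m A (f n) + n \<le> m A A" for n
  proof (induction n)
    case 0 then show ?case using f Inv_base by simp
  next
    case (Suc n) then show ?case using succ_step f(2) by fastforce
  qed
  from this[of "Suc (m A A)"] show False by simp
qed

lemma leaf_hintikka:
  assumes "\<not> (\<exists>ns. normal_app L ns)" "\<not> closed_fm L"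
  shows "hintikka L"
  unfolding hintikka_def
proof (intro conjI allI impI)
  show "\<not> closed_fm L" by fact
next
  fix B C assume "neg_part L (Or B C)"
  then show "neg_part L B \<or> neg_part L C"
    using assms rule_app.or_neg[of L B C] unfolding normal_app_def by auto
next
  fix a b assume "neg_part L (Eps a b)"
  then show "neg_part L (Eps a a)"
    using assms rule_app.eps1[of L a b] unfolding normal_app_def by auto
next
  fix a b c assume "neg_part L (Eps a b) \<and> neg_part L (Eps b c)"
  then show "neg_part L (Eps a c)"
    using assms rule_app.eps2[of L a b c] unfolding normal_app_def by auto
next
  fix a b assume "neg_part L (Eps a b) \<and> neg_part L (Eps b b)"
  then show "neg_part L (Eps b a)"
    using assms rule_app.eps3b[of L a b] unfolding normal_app_def by auto
qed

theorem theorem2p1: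
  fixes A :: fm
  shows "\<not> (\<exists>f. f 0 = A \<and> (\<forall>n. normal_succ (f n) (f (Suc n))))
    \<and> (\<exists>N. \<forall>t. normal_tableau_for A t \<longrightarrow> num_nodes t \<le> N)
    \<and> (\<forall>t. normal_tableau_for A t \<and> completed t \<longrightarrow>
          (\<forall>L\<in>leaf_labels t. closed_fm L \<or> hintikka L))"
proof (intro conjI)
  show "\<not> (\<exists>f. f 0 = A \<and> (\<forall>n. normal_succ (f n) (f (Suc n))))" by (rule no_chain)
  show "\<exists>N. \<forall>t. normal_tableau_for A t \<longrightarrow> num_nodes t \<le> N"
  proof (intro exI allI impI)
    fix t assume "normal_tableau_for A t"
    then have "normal_tab t" "root t = A" unfolding normal_tableau_for_def by auto
    then show "num_nodes t \<le> 3 ^ m A A" using tab_bound[of t A] Inv_base by simp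
  qed
  show "\<forall>t. normal_tableau_for A t \<and> completed t \<longrightarrow>
          (\<forall>L\<in>leaf_labels t. closed_fm L \<or> hintikka L)"
  proof (intro allI impI ballI)
    fix t L assume "normal_tableau_for A t \<and> completed t" "L \<in> leaf_labels t"
    then have "\<not> (\<exists>ns. normal_app L ns)" unfolding completed_def by blast
    then show "closed_fm L \<or> hintikka L" using leaf_hintikka by blast
  qed
qed

end
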